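(* Let $\mathbf{L}_1,\dots,\mathbf{L}_n$ be latent factors and $\mathbf{X}_{\mathbf{t}_1},\mathbf{Y}_{\mathbf{t}_1},\dots,\mathbf{X}_{\mathbf{t}_m},\mathbf{Y}_{\mathbf{t}_m}$ observed variables in a causal graph in which $Pa(\mathbf{X}_{\mathbf{t}_s})=\{\mathbf{L}_1,\dots,\mathbf{L}_n\}$ and $Pa(\mathbf{Y}_{\mathbf{t}_s})\subseteq\{\mathbf{L}_1,\dots,\mathbf{L}_n\}$ for all $s$. Let $\mathcal{F}$ be the smallest family of subsets of $\{\mathbf{L}_1,\dots,\mathbf{L}_n\}$ such that (1) $\emptyset, Pa(\mathbf{X}_{\mathbf{t}_1}), Pa(\mathbf{Y}_{\mathbf{t}_1}),\dots,Pa(\mathbf{X}_{\mathbf{t}_m}),Pa(\mathbf{Y}_{\mathbf{t}_m})\in\mathcal{F}$ and (2) $\mathcal{A},\mathcal{B}\in\mathcal{F}$ implies $\mathcal{A}-\mathcal{B},\ \mathcal{B}-\mathcal{A}\in\mathcal{F}$, where $\mathcal{A}-\mathcal{B}=\mathcal{A}\cap\bar{\mathcal{B}}$. Then $\{\mathbf{L}_1\},\{\mathbf{L}_2\},\dots,\{\mathbf{L}_n\}\in\mathcal{F}$ if and only if for any two distinct latent factors $\mathbf{L}_i\neq\mathbf{L}_j$, their child sets are not identical, $Ch(\mathbf{L}_i)\neq Ch(\mathbf{L}_j)$.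
   Context: $Pa(V)$ denotes the set of parents of $V$ in the causal graph. The child set $Ch(\mathbf{L}_i)$ is the set of observed variables among $\mathbf{X}_{\mathbf{t}_1},\mathbf{Y}_{\mathbf{t}_1},\dots,\mathbf{X}_{\mathbf{t}_m},\mathbf{Y}_{\mathbf{t}_m}$ that have $\mathbf{L}_i$ as a parent. *)

theory Defs
  imports Main
begin

text \<open>Latent factors L_1..L_n are represented by their indices 1..n.
  Observed variables X_{t_s}, Y_{t_s} (s = 1..m) are represented by the datatype below.\<close>

datatype obs = Xv nat | Yv nat

definition observed :: "nat \<Rightarrow> obs set" where
  "observed m = {Xv s | s. s \<in> {1..m}} \<union> {Yv s | s. s \<in> {1..m}}"

definition Ch :: "(obs \<Rightarrow> nat set) \<Rightarrow> nat \<Rightarrow> nat \<Rightarrow> obs set" where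
  "Ch pa m i = {v \<in> observed m. i \<in> pa v}"

inductive_set diffClosure :: "'a set set \<Rightarrow> 'a set set" for G :: "'a set set" where
  empty: "{} \<in> diffClosure G"
| gen: "P \<in> G \<Longrightarrow> P \<in> diffClosure G"
| diff1: "A \<in> diffClosure G \<Longrightarrow> B \<in> diffClosure G \<Longrightarrow> A - B \<in> diffClosure G"
| diff2: "A \<in> diffClosure G \<Longrightarrow> B \<in> diffClosure G \<Longrightarrow> B - A \<in> diffClosure G"

definition famF :: "(obs \<Rightarrow> nat set) \<Rightarrow> nat \<Rightarrow> nat set set" where
  "famF pa m = diffClosure (pa ` observed m)"

end

theory Submission
  imports Defs
begin

lemma dc_sep:
  assumes "A \<in> diffClosure G" "\<forall>P\<in>G. (i \<in> P \<longleftrightarrow> j \<in> P)"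
  shows "i \<in> A \<longleftrightarrow> j \<in> A"
  using assms by (induction A rule: diffClosure.induct) auto

lemma dc_inter:
  assumes "finite S" "S \<subseteq> G" "U \<in> G" "\<forall>g\<in>G. g \<subseteq> U"
  shows "U \<inter> \<Inter>((\<lambda>g. if i \<in> g then g else U - g) ` S) \<in> diffClosure G"
  using assms(1,2)
proof (induction S rule: finite_induct)
  case empty
  then show ?case using assms(3) by (simp add: diffClosure.gen)
next
  case (insert g S)
  define T where "T = U \<inter> \<Inter>((\<lambda>g. if i \<in> g then g else U - g) ` S)"
  define h where "h = (if i \<in> g then g else U - g)"
  have T: "T \<in> diffClosure G" using insert T_def by auto
  have gG: "g \<in> diffClosure G" using insert by (auto intro: diffClosure.gen)
  have UG: "U \<in> diffClosure G" using assms(3) by (auto intro: diffClosure.gen)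
  have hG: "h \<in> diffClosure G" unfolding h_def using gG UG
    by (auto intro: diffClosure.diff1)
  have Uh: "U - h \<in> diffClosure G" using UG hG by (rule diffClosure.diff1)
  have mem: "T - (U - h) \<in> diffClosure G" using Uh T by (rule diffClosure.diff2)
  have TU: "T \<subseteq> U" unfolding T_def by blast
  have e1: "T - (U - h) = T \<inter> h" using TU by blast
  have e2: "T \<inter> h = U \<inter> \<Inter>((\<lambda>g. if i \<in> g then g else U - g) ` (insert g S))"
    unfolding T_def h_def by (simp only: image_insert Inter_insert Int_ac)
  show ?case using mem e1 e2 by simp
qed

theorem lemmaA4:
  fixes n m :: nat and pa :: "obs \<Rightarrow> nat set"
  assumes "m \<ge> 1"
    and "\<And>s. s \<in> {1..m} \<Longrightarrow> pa (Xv s) = {1..n}"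
    and "\<And>s. s \<in> {1..m} \<Longrightarrow> pa (Yv s) \<subseteq> {1..n}"
  shows "(\<forall>i\<in>{1..n}. {i} \<in> famF pa m) \<longleftrightarrow>
         (\<forall>i\<in>{1..n}. \<forall>j\<in>{1..n}. i \<noteq> j \<longrightarrow> Ch pa m i \<noteq> Ch pa m j)"
proof
  assume H: "\<forall>i\<in>{1..n}. {i} \<in> famF pa m"
  show "\<forall>i\<in>{1..n}. \<forall>j\<in>{1..n}. i \<noteq> j \<longrightarrow> Ch pa m i \<noteq> Ch pa m j"
  proof (intro ballI impI)
    fix i j assume ij: "i \<in> {1..n}" "j \<in> {1..n}" "i \<noteq> j"
    show "Ch pa m i \<noteq> Ch pa m j"
    proof
      assume C: "Ch pa m i = Ch pa m j"
      have sep: "\<forall>P\<in>pa ` observed m. (i \<in> P \<longleftrightarrow> j \<in> P)"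
      proof
        fix P assume "P \<in> pa ` observed m"
        then obtain v where v: "v \<in> observed m" "P = pa v" by auto
        have "(v \<in> Ch pa m i) = (v \<in> Ch pa m j)" using C by (rule arg_cong)
        moreover have "\<And>k. (v \<in> Ch pa m k) = (k \<in> pa v)" using v(1) unfolding Ch_def by blast
        ultimately show "i \<in> P \<longleftrightarrow> j \<in> P" using v(2) by simp
      qed
      have mi: "{i} \<in> diffClosure (pa ` observed m)" using H ij(1) unfolding famF_def by blast
      have "i \<in> {i} \<longleftrightarrow> j \<in> {i}" by (rule dc_sep[OF mi sep])
      then have "j = i" by simp
      then show False using ij(3) by simp
    qed
  qed
next
  assume H: "\<forall>i\<in>{1..n}. \<forall>j\<in>{1..n}. i \<noteq> j \<longrightarrow> Ch pa m i \<noteq> Ch pa m j"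
  define G where "G = pa ` observed m"
  define U where "U = {1..n::nat}"
  have finobs: "finite (observed m)"
  proof -
    have "observed m = Xv ` {1..m} \<union> Yv ` {1..m}" unfolding observed_def by blast
    then show ?thesis by simp
  qed
  have finG: "finite G" unfolding G_def using finobs by simp
  have X1: "Xv 1 \<in> observed m" unfolding observed_def using assms(1) by auto
  have "pa (Xv 1) = U" unfolding U_def using assms(1,2) by simp
  then have UG: "U \<in> G" unfolding G_def using X1 by (metis image_eqI)
  have sub: "\<forall>g\<in>G. g \<subseteq> U"
  proof
    fix g assume "g \<in> G"
    then obtain v where v: "v \<in> observed m" "g = pa v" unfolding G_def by auto
    then obtain s where "s \<in> {1..m}" "v = Xv s \<or> v = Yv s" unfolding observed_def by auto
    then show "g \<subseteq> U" using v assms(2,3) unfolding U_def by auto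
  qed
  show "\<forall>i\<in>{1..n}. {i} \<in> famF pa m"
  proof
    fix i assume i: "i \<in> {1..n}"
    define T where "T = U \<inter> \<Inter>((\<lambda>g. if i \<in> g then g else U - g) ` G)"
    have TG: "T \<in> diffClosure G" unfolding T_def using dc_inter[OF finG _ UG sub] by blast
    have "T = {i}"
    proof
      have "\<forall>g\<in>G. i \<in> (if i \<in> g then g else U - g)" using i unfolding U_def by simp
      moreover have "i \<in> U" using i unfolding U_def by simp
      ultimately show "{i} \<subseteq> T" unfolding T_def by blast
      show "T \<subseteq> {i}"
      proof
        fix j assume j: "j \<in> T"
        have jU: "j \<in> {1..n}" using j unfolding T_def U_def by auto
        have "\<forall>g\<in>G. (i \<in> g \<longleftrightarrow> j \<in> g)"
        proof
          fix g assume g: "g \<in> G"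
          then have "j \<in> (if i \<in> g then g else U - g)" using j unfolding T_def by blast
          then show "i \<in> g \<longleftrightarrow> j \<in> g" by (auto split: if_splits)
        qed
        then have "\<forall>v\<in>observed m. (i \<in> pa v \<longleftrightarrow> j \<in> pa v)" unfolding G_def by blast
        then have "Ch pa m i = Ch pa m j" unfolding Ch_def by blast
        then have "\<not> (i \<noteq> j)" using H i jU by blast
        then show "j \<in> {i}" by simp
      qed
    qed
    then show "{i} \<in> famF pa m" using TG unfolding famF_def G_def by simp
  qed
qed

end
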